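(* Let $F$ be a positive integer and $S\in\mathrm{Sat}(F)$. Then for every integer $g$ with $\mathrm{g}(S)\le g\le F$ there exists $T\in\mathrm{Sat}(F)$ with $\mathrm{g}(T)=g$.
   Context: A numerical semigroup is a subset $S\subseteq\mathbb{N}$ closed under addition, containing $0$, with $\mathbb{N}\setminus S$ finite. Its genus $\mathrm{g}(S)$ is the cardinality of $\mathbb{N}\setminus S$, and its Frobenius number $\mathrm{F}(S)$ is the largest integer not in $S$. For $A\subseteq\mathbb{N}$ and $a\in A$, let $\mathrm{d}_A(a)=\gcd\{x\in A\mid x\le a\}$. A numerical semigroup $S$ is saturated if $s+\mathrm{d}_S(s)\in S$ for all $s\in S\setminus\{0\}$. For a positive integer $F$, $\mathrm{Sat}(F)$ denotes the set of all saturated numerical semigroups $S$ with $\mathrm{F}(S)=F$. *)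

theory Defs
  imports Main
begin

definition numerical_semigroup :: "nat set \<Rightarrow> bool" where
  "numerical_semigroup S \<longleftrightarrow> 0 \<in> S \<and> (\<forall>x\<in>S. \<forall>y\<in>S. x + y \<in> S) \<and> finite (UNIV - S)"

definition genus :: "nat set \<Rightarrow> nat" where
  "genus S = card (UNIV - S)"

(* Frobenius number: the largest natural number not in S (only used when UNIV - S is nonempty) *)
definition frobenius :: "nat set \<Rightarrow> nat" where
  "frobenius S = Max (UNIV - S)"

definition dA :: "nat set \<Rightarrow> nat \<Rightarrow> nat" where
  "dA A a = Gcd {x \<in> A. x \<le> a}"

definition saturated :: "nat set \<Rightarrow> bool" where
  "saturated S \<longleftrightarrow> numerical_semigroup S \<and> (\<forall>s\<in>S - {0}. s + dA S s \<in> S)"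

definition Sat :: "nat \<Rightarrow> nat set set" where
  "Sat F = {S. saturated S \<and> UNIV - S \<noteq> {} \<and> frobenius S = F}"

end

theory Submission
  imports Defs
begin

lemma Sat_basic:
  assumes "S \<in> Sat F"
  shows "F \<notin> S" "\<And>x. F < x \<Longrightarrow> x \<in> S" "finite (UNIV - S)"
proof -
  have ns: "numerical_semigroup S" and ne: "UNIV - S \<noteq> {}" and fr: "Max (UNIV - S) = F"
    using assms by (auto simp: Sat_def saturated_def frobenius_def)
  show fin: "finite (UNIV - S)" using ns by (simp add: numerical_semigroup_def)
  show "F \<notin> S" using Max_in[OF fin ne] fr by auto
  show "\<And>x. F < x \<Longrightarrow> x \<in> S"
  proof (rule ccontr)
    fix x assume "F < x" "x \<notin> S"
    hence "x \<le> Max (UNIV - S)" using fin by (intro Max_ge) auto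
    thus False using \<open>F < x\<close> fr by simp
  qed
qed

lemma Sat_d:
  assumes "F > 0" "S \<in> Sat F"
  shows "\<exists>d. \<not> d dvd F \<and> (\<forall>x\<in>S. 0 < x \<and> x < F \<longrightarrow> d dvd x)"
proof (cases "S \<inter> {0<..<F} = {}")
  case True
  thus ?thesis using assms(1) by (intro exI[of _ 0]) auto
next
  case False
  have FS: "F \<notin> S" using Sat_basic[OF assms(2)] by auto
  have sat: "\<forall>s\<in>S - {0}. s + dA S s \<in> S" using assms(2) by (simp add: Sat_def saturated_def)
  define s0 where "s0 = Max (S \<inter> {0<..<F})"
  have fin: "finite (S \<inter> {0<..<F})" by simp
  have s0in: "s0 \<in> S \<inter> {0<..<F}" unfolding s0_def using Max_in[OF fin False] .
  have s0max: "\<And>x. x \<in> S \<Longrightarrow> 0 < x \<Longrightarrow> x < F \<Longrightarrow> x \<le> s0"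
    unfolding s0_def using fin by (intro Max_ge) auto
  define d where "d = dA S s0"
  have dvx: "d dvd x" if "x \<in> S" "x \<le> s0" for x
    unfolding d_def dA_def by (rule Gcd_dvd) (use that in auto)
  have ds0: "d dvd s0" using dvx s0in by auto
  have s0d: "s0 + d \<in> S" using sat s0in by (auto simp: d_def)
  have "\<not> d dvd F"
  proof
    assume dF: "d dvd F"
    have "d \<noteq> 0" using dF assms(1) by auto
    obtain a where a: "s0 = d * a" using ds0 by auto
    obtain b where b: "F = d * b" using dF by auto
    have "a < b" using s0in a b \<open>d \<noteq> 0\<close> by auto
    hence "d * (a + 1) \<le> d * b" by (intro mult_le_mono2) simp
    hence le: "s0 + d \<le> F" using a b by (simp add: algebra_simps)
    have "s0 + d \<noteq> F" using FS s0d by auto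
    hence "s0 + d < F" using le by simp
    hence "s0 + d \<le> s0" using s0max[OF s0d] \<open>d \<noteq> 0\<close> by auto
    thus False using \<open>d \<noteq> 0\<close> by simp
  qed
  moreover have "\<forall>x\<in>S. 0 < x \<and> x < F \<longrightarrow> d dvd x" using dvx s0max by auto
  ultimately show ?thesis by blast
qed

lemma T_Sat:
  assumes "F > 0" "\<not> d dvd F"
  shows "{0} \<union> {x. c \<le> x \<and> 0 < x \<and> x < F \<and> d dvd x} \<union> {x. F < x} \<in> Sat F"
    (is "?T \<in> _")
proof -
  have key: "y \<in> ?T" if "d dvd y" "c \<le> y" "0 < y" for y
  proof -
    have "y \<noteq> F" using that assms by auto
    thus ?thesis using that by auto
  qed
  have compl: "UNIV - ?T = {1..F} - {x. c \<le> x \<and> 0 < x \<and> x < F \<and> d dvd x}" by auto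
  have fin: "finite (UNIV - ?T)" unfolding compl by simp
  have closed: "x + y \<in> ?T" if "x \<in> ?T" "y \<in> ?T" for x y
  proof -
    have "x = 0 \<or> y = 0 \<or> F < x \<or> F < y \<or> (d dvd x \<and> c \<le> x \<and> 0 < x \<and> d dvd y)"
      using that by auto
    moreover have "d dvd x \<and> c \<le> x \<and> 0 < x \<and> d dvd y \<Longrightarrow> x + y \<in> ?T"
      by (intro key) auto
    ultimately show ?thesis using that by auto
  qed
  have ns: "numerical_semigroup ?T" unfolding numerical_semigroup_def using closed fin by auto
  have satp: "s + dA ?T s \<in> ?T" if "s \<in> ?T - {0}" for s
  proof (cases "F < s")
    case True thus ?thesis by auto
  next
    case False
    hence s: "d dvd s" "c \<le> s" "0 < s" "s < F" using that by auto
    have "d dvd dA ?T s" unfolding dA_def by (rule Gcd_greatest) (use s in auto)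
    hence "d dvd s + dA ?T s" using s by auto
    thus ?thesis using s by (intro key) auto
  qed
  have FnT: "F \<in> UNIV - ?T" using assms(1) by auto
  have ne: "UNIV - ?T \<noteq> {}" using FnT by (rule ex_in_conv[THEN iffD1, OF exI])
  have bd: "\<forall>a\<in>UNIV - ?T. a \<le> F"
  proof (rule ballI)
    fix a assume a: "a \<in> UNIV - ?T"
    show "a \<le> F"
    proof (rule ccontr)
      assume "\<not> a \<le> F"
      hence "F < a" by (simp only: not_le)
      hence in1: "a \<in> ?T" by simp
      show False by (rule DiffD2[OF a in1])
    qed
  qed
  have "Max (UNIV - ?T) = F"
    by (rule antisym[OF Max.boundedI[OF fin ne bd[rule_format]] Max_ge[OF fin FnT]])
  hence fr: "frobenius ?T = F" by (simp only: frobenius_def)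
  have "saturated ?T" unfolding saturated_def by (intro conjI ns ballI satp)
  thus ?thesis unfolding Sat_def using ne fr by (intro CollectI conjI)
qed

theorem lemma27:
  fixes F :: nat and S :: "nat set" and g :: nat
  assumes "F > 0" and "S \<in> Sat F" and "genus S \<le> g" and "g \<le> F"
  shows "\<exists>T \<in> Sat F. genus T = g"
proof -
  obtain d where nd: "\<not> d dvd F" and dv: "\<forall>x\<in>S. 0 < x \<and> x < F \<longrightarrow> d dvd x"
    using Sat_d[OF assms(1,2)] by blast
  define T where "T c = {0} \<union> {x. c \<le> x \<and> 0 < x \<and> x < F \<and> d dvd x} \<union> {x. F < x}" for c
  have compl: "UNIV - T c = {1..F} - {x. c \<le> x \<and> 0 < x \<and> x < F \<and> d dvd x}" for c
    unfolding T_def by auto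
  define f where "f c = int (genus (T c))" for c
  have step: "\<bar>f (Suc i) - f i\<bar> \<le> 1" for i
  proof -
    have e: "UNIV - T (Suc i) = (UNIV - T i) \<union> ({i} \<inter> {x. 0 < x \<and> x < F \<and> d dvd x})"
      unfolding compl by auto
    have fi: "finite (UNIV - T i)" unfolding compl by simp
    have "card (UNIV - T (Suc i)) \<le> card (UNIV - T i) + card ({i} \<inter> {x. 0 < x \<and> x < F \<and> d dvd x})"
      unfolding e by (rule card_Un_le)
    also have "\<dots> \<le> card (UNIV - T i) + 1"
      using card_mono[of "{i}" "{i} \<inter> {x. 0 < x \<and> x < F \<and> d dvd x}"] by auto
    finally have a: "card (UNIV - T (Suc i)) \<le> card (UNIV - T i) + 1" .
    have b: "card (UNIV - T i) \<le> card (UNIV - T (Suc i))"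
      unfolding e by (rule card_mono) (use fi in auto)
    show ?thesis using a b by (simp add: f_def genus_def)
  qed
  have f0: "f 0 \<le> int g"
  proof -
    have "UNIV - T 0 \<subseteq> UNIV - S"
      unfolding compl using dv Sat_basic(1)[OF assms(2)] by (auto simp: le_less)
    hence "genus (T 0) \<le> genus S" unfolding genus_def
      by (rule card_mono[OF Sat_basic(3)[OF assms(2)]])
    thus ?thesis using assms(3) by (simp add: f_def)
  qed
  have fF: "f (F + 1) = int F"
  proof -
    have "UNIV - T (F+1) = {1..F}" unfolding compl by auto
    thus ?thesis by (simp add: f_def genus_def)
  qed
  obtain i where "f i = int g"
    using nat_intermed_int_val[of 0 "F+1" f "int g"] step f0 fF assms(4) by auto
  moreover have "T i \<in> Sat F" unfolding T_def by (rule T_Sat[OF assms(1) nd])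
  ultimately show ?thesis by (auto simp: f_def)
qed

end
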